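(* Let $f_0,f_1\in \mathrm{PL}_0(\mathbf{I})$ satisfy $[f_1^{f_0},f_0f_1^{-1}]=1$ and $[f_0f_1^{-1},f_1^{f_0^2}]=1$. If $A$ is an orbital of both $f_0$ and $f_1$, then $f_0$ and $f_1$ commute on $A$, i.e. $(f_0f_1)|_A=(f_1f_0)|_A$.
   Context: $\mathrm{PL}_0(\mathbf{I})$ is the group of orientation-preserving piecewise-linear homeomorphisms of $[0,1]$ with finitely many points of non-differentiability. Functions act on the right: $tf=f(t)$, $fg=g\circ f$, $a^b=b^{-1}ab$, $[a,b]=aba^{-1}b^{-1}$. The orbitals of $f$ are the connected components (open intervals) of $\operatorname{Supp}(f)=\{x: xf\ne x\}$. *)

theory Defs
  imports "HOL-Analysis.Analysis"
begin

text \<open>Elements of PL_0(I) are represented as functions real => real that are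
  the identity outside [0,1] (so that they are bijections of the real line and
  composition / inverse are the usual ones).\<close>

definition PL0 :: "(real \<Rightarrow> real) \<Rightarrow> bool" where
  "PL0 f \<longleftrightarrow>
     continuous_on {0..1} f \<and> strict_mono_on {0..1} f \<and> f 0 = 0 \<and> f 1 = 1 \<and>
     (\<forall>x. x \<notin> {0..1} \<longrightarrow> f x = x) \<and>
     (\<exists>B. finite B \<and> B \<subseteq> {0..1} \<and>
        (\<forall>a b. 0 \<le> a \<and> a < b \<and> b \<le> 1 \<and> {a<..<b} \<inter> B = {} \<longrightarrow>
           (\<exists>m c. \<forall>x\<in>{a..b}. f x = m * x + c)))"

text \<open>Right actions: t(fg) = g(f(t)).\<close>
definition rmul :: "(real \<Rightarrow> real) \<Rightarrow> (real \<Rightarrow> real) \<Rightarrow> (real \<Rightarrow> real)" where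
  "rmul f g = g \<circ> f"

definition rinv :: "(real \<Rightarrow> real) \<Rightarrow> (real \<Rightarrow> real)" where
  "rinv f = inv f"

definition rconj :: "(real \<Rightarrow> real) \<Rightarrow> (real \<Rightarrow> real) \<Rightarrow> (real \<Rightarrow> real)" where
  "rconj a b = rmul (rmul (rinv b) a) b"

definition rcomm :: "(real \<Rightarrow> real) \<Rightarrow> (real \<Rightarrow> real) \<Rightarrow> (real \<Rightarrow> real)" where
  "rcomm a b = rmul (rmul (rmul a b) (rinv a)) (rinv b)"

definition supp :: "(real \<Rightarrow> real) \<Rightarrow> real set" where
  "supp f = {x. f x \<noteq> x}"

definition orbitals :: "(real \<Rightarrow> real) \<Rightarrow> real set set" where
  "orbitals f = components (supp f)"

end

theory Submission imports Defs begin

lemma PL0_mono: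
  assumes "PL0 f" shows "strict_mono f"
proof -
  from assms have sm: "strict_mono_on {0..1} f" and f0: "f 0 = 0" and f1: "f 1 = 1"
    and out: "\<And>x. x \<notin> {0..1} \<Longrightarrow> f x = x" unfolding PL0_def by auto
  have rng: "x \<in> {0..1} \<Longrightarrow> 0 \<le> f x \<and> f x \<le> 1" for x
    using strict_mono_onD[OF sm, of 0 x] strict_mono_onD[OF sm, of x 1] f0 f1
    by (cases "x = 0"; cases "x = 1") auto
  have pos: "x \<in> {0<..<1} \<Longrightarrow> 0 < f x \<and> f x < 1" for x
    using strict_mono_onD[OF sm, of 0 x] strict_mono_onD[OF sm, of x 1] f0 f1 by auto
  show ?thesis
  proof (rule strict_monoI)
    fix x y :: real assume xy: "x < y"
    show "f x < f y"
    proof (cases "x \<in> {0..1}")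
      case True
      show ?thesis
      proof (cases "y \<in> {0..1}")
        case True with \<open>x\<in>{0..1}\<close> xy show ?thesis using strict_mono_onD[OF sm] by auto
      next
        case False
        then have "y > 1" using xy True by auto
        then show ?thesis using out[OF False] rng[OF True] \<open>x\<in>{0..1}\<close> xy
          strict_mono_onD[OF sm, of x 1] f1 by (cases "x = 1") auto
      qed
    next
      case False
      show ?thesis
      proof (cases "y \<in> {0..1}")
        case True
        then have "x < 0" using xy False by auto
        then show ?thesis using out[OF False] rng[OF True] True
          strict_mono_onD[OF sm, of 0 y] f0 by (cases "y = 0") auto
      next
        case F2: False
        then show ?thesis using out[OF False] out[OF F2] xy by auto
      qed
    qed
  qed
qed

lemma PL0_img:
  assumes "PL0 f" shows "f ` {0..1} = {0..1}"
proof -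
  from assms have c: "continuous_on {0..1} f" and f0: "f 0 = 0" and f1: "f 1 = 1"
    unfolding PL0_def by auto
  have m: "strict_mono f" using PL0_mono[OF assms] .
  show ?thesis
  proof
    show "f ` {0..1} \<subseteq> {0..1}"
    proof
      fix y assume "y \<in> f ` {0..1}"
      then obtain x where x: "x \<in> {0..1}" "y = f x" by auto
      have "f 0 \<le> f x" using x(1) by (simp add: strict_mono_less_eq[OF m])
      moreover have "f x \<le> f 1" using x(1) by (simp add: strict_mono_less_eq[OF m])
      ultimately show "y \<in> {0..1}" using f0 f1 x(2) by simp
    qed
  next
    show "{0..1} \<subseteq> f ` {0..1}"
    proof
      fix y :: real assume "y \<in> {0..1}"
      then obtain x where "0 \<le> x" "x \<le> 1" "f x = y" using IVT'[of f 0 y 1] c f0 f1 by auto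
      then show "y \<in> f ` {0..1}" by force
    qed
  qed
qed

lemma PL0_bij:
  assumes "PL0 f" shows "bij f"
proof -
  have m: "strict_mono f" using PL0_mono[OF assms] .
  have out: "\<And>x. x \<notin> {0..1} \<Longrightarrow> f x = x" using assms unfolding PL0_def by auto
  have "surj f"
  proof -
    { fix y :: real
      have "y \<in> range f"
      proof (cases "y \<in> {0..1}")
        case True
        then have "y \<in> f ` {0..1}" using PL0_img[OF assms] by simp
        then show ?thesis by blast
      next
        case False then show ?thesis using out[OF False] by (metis rangeI)
      qed }
    then show ?thesis by auto
  qed
  then show ?thesis using strict_mono_imp_inj_on[OF m] by (simp add: bij_def)
qed

lemma PL0_cont:
  assumes "PL0 f" shows "continuous_on UNIV f"
proof -
  from assms have c: "continuous_on {0..1} f" and f0: "f 0 = 0" and f1: "f 1 = 1"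
    and out: "\<And>x. x \<notin> {0..1} \<Longrightarrow> f x = x" unfolding PL0_def by auto
  have "continuous_on {..0} f"
  proof -
    have "\<forall>x\<in>{..0::real}. f x = x" using out f0 by force
    then show ?thesis using continuous_on_id continuous_on_cong by (metis (no_types, lifting))
  qed
  moreover have "continuous_on {1..} f"
  proof -
    have "\<forall>x\<in>{1::real..}. f x = x" using out f1 by force
    then show ?thesis using continuous_on_id continuous_on_cong by (metis (no_types, lifting))
  qed
  ultimately have "continuous_on ({..0} \<union> {0..1} \<union> {1..}) f"
    using c by (intro continuous_on_closed_Un) auto
  moreover have "{..0} \<union> {0..1} \<union> {1..} = (UNIV::real set)" by auto
  ultimately show ?thesis by simp
qed


definition P :: "(real \<Rightarrow> real) \<Rightarrow> bool" where
  "P f \<longleftrightarrow> bij f \<and> strict_mono f \<and> continuous_on {0..1} f \<and> f ` {0..1} = {0..1}"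

lemma PL0_P: "PL0 f \<Longrightarrow> P f"
  unfolding P_def using PL0_bij PL0_mono PL0_img by (auto simp: PL0_def)

lemma P_comp: assumes "P f" "P g" shows "P (f \<circ> g)"
proof -
  have "bij (f \<circ> g)" using assms by (auto simp: P_def intro: bij_comp)
  moreover have "strict_mono (f \<circ> g)" using assms
    by (auto simp: P_def strict_mono_def)
  moreover have "continuous_on {0..1} (f \<circ> g)"
  proof (rule continuous_on_compose)
    show "continuous_on {0..1} g" using assms(2) by (simp add: P_def)
    show "continuous_on (g ` {0..1}) f" using assms by (simp add: P_def)
  qed
  moreover have "(f \<circ> g) ` {0..1} = {0..1}"
  proof -
    have "(f \<circ> g) ` {0..1} = f ` (g ` {0..1})" by (simp add: image_comp)
    then show ?thesis using assms by (simp add: P_def)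
  qed
  ultimately show ?thesis unfolding P_def by blast
qed

lemma P_inv: assumes "P f" shows "P (inv f)"
proof -
  have b: "bij f" and m: "strict_mono f" and c: "continuous_on {0..1} f"
    and i: "f ` {0..1} = {0..1}" using assms by (auto simp: P_def)
  have "bij (inv f)" using b by (simp add: bij_imp_bij_inv)
  moreover have "strict_mono (inv f)"
  proof (rule strict_monoI)
    fix x y :: real assume "x < y"
    show "inv f x < inv f y"
    proof (rule ccontr)
      assume "\<not> inv f x < inv f y"
      then have "inv f y \<le> inv f x" by simp
      then have "f (inv f y) \<le> f (inv f x)" using m by (simp add: strict_mono_less_eq)
      then show False using \<open>x < y\<close> b by (simp add: bij_is_surj surj_f_inv_f)
    qed
  qed
  moreover have "continuous_on {0..1} (inv f)"
  proof -
    have "continuous_on (f ` {0..1}) (inv f)"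
      by (rule continuous_on_inv[OF c]) (use b in \<open>auto simp: bij_is_inj\<close>)
    then show ?thesis using i by simp
  qed
  moreover have "inv f ` {0..1} = {0..1}"
  proof -
    have "inv f ` (f ` {0..1}) = {0..1}" by (rule image_inv_f_f[OF bij_is_inj[OF b]])
    then show ?thesis using i by simp
  qed
  ultimately show ?thesis unfolding P_def by blast
qed

lemma P_fix_inv: assumes "P f" "f a = a" shows "inv f a = a"
proof -
  have b: "bij f" using assms(1) by (simp add: P_def)
  have "inv f (f a) = a" by (rule inv_f_f[OF bij_is_inj[OF b]])
  then show ?thesis using assms(2) by simp
qed

lemma P_maps: assumes "P h" "h a = a" "h d = d" "x \<in> {a<..<d}" shows "h x \<in> {a<..<d}"
proof -
  have m: "strict_mono h" using assms(1) by (simp add: P_def)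
  show ?thesis using assms(2-4) strict_monoD[OF m, of a x] strict_monoD[OF m, of x d] by auto
qed

lemma comm_of_rcomm:
  assumes "rcomm x y = id" "bij x" "bij y"
  shows "x (y z) = y (x z)"
proof -
  have "inv y (inv x (y (x z))) = z" using fun_cong[OF assms(1), of z]
    by (simp add: rcomm_def rmul_def rinv_def)
  then have "x (y (inv y (inv x (y (x z))))) = x (y z)" by simp
  then show ?thesis using assms(2,3) by (simp add: bij_is_surj surj_f_inv_f)
qed

lemma orbital_shape:
  assumes "PL0 f" "A \<in> orbitals f"
  shows "\<exists>a d. A = {a<..<d} \<and> 0 \<le> a \<and> a < d \<and> d \<le> 1 \<and> f a = a \<and> f d = d"
proof -
  have out: "\<And>x. x \<notin> {0..1} \<Longrightarrow> f x = x" using assms(1) unfolding PL0_def by auto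
  have opS: "open (supp f)" unfolding supp_def
    by (rule open_Collect_neq[OF PL0_cont[OF assms(1)] continuous_on_id])
  have comp: "A \<in> components (supp f)" using assms(2) by (simp add: orbitals_def)
  have AS: "A \<subseteq> supp f" using comp by (simp add: in_components_subset)
  have S01: "supp f \<subseteq> {0..1}"
  proof
    fix x assume "x \<in> supp f"
    then have "f x \<noteq> x" by (simp add: supp_def)
    then show "x \<in> {0..1}" using out by blast
  qed
  have ne: "A \<noteq> {}" using comp in_components_nonempty by blast
  have opA: "open A" using open_components[OF opS comp] .
  have conA: "connected A" using comp in_components_connected by blast
  have A01: "A \<subseteq> {0..1}" using AS S01 by auto
  have bb: "bdd_below A" "bdd_above A"
    using bdd_below_mono[OF bdd_below_Icc A01] bdd_above_mono[OF bdd_above_Icc A01] by auto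
  define a where "a = Inf A"
  define d where "d = Sup A"
  have lo: "a < x" if xA: "x \<in> A" for x
  proof -
    obtain e where e: "e > 0" "ball x e \<subseteq> A" by (rule openE[OF opA xA])
    have "x - e/2 \<in> ball x e" using e(1) by (simp add: dist_real_def)
    then have "x - e/2 \<in> A" using e(2) by blast
    then have "Inf A \<le> x - e/2" using bb(1) by (rule cInf_lower)
    then show ?thesis using e(1) unfolding a_def by simp
  qed
  have hi: "x < d" if xA: "x \<in> A" for x
  proof -
    obtain e where e: "e > 0" "ball x e \<subseteq> A" by (rule openE[OF opA xA])
    have "x + e/2 \<in> ball x e" using e(1) by (simp add: dist_real_def)
    then have "x + e/2 \<in> A" using e(2) by blast
    then have "x + e/2 \<le> Sup A" using bb(2) by (rule cSup_upper)
    then show ?thesis using e(1) unfolding d_def by simp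
  qed
  have ivl: "\<forall>u\<in>A. \<forall>v\<in>A. \<forall>w. u \<le> w \<longrightarrow> w \<le> v \<longrightarrow> w \<in> A"
    using conA by (simp only: connected_iff_interval)
  have mid: "x \<in> A" if "a < x" "x < d" for x
  proof -
    have "Inf A < x" using that(1) by (simp add: a_def)
    then obtain y where y: "y \<in> A" "y < x" using cInf_less_iff[OF ne bb(1)] by blast
    have "x < Sup A" using that(2) by (simp add: d_def)
    then obtain z where z: "z \<in> A" "x < z" using less_cSup_iff[OF ne bb(2)] by blast
    show ?thesis using ivl y z less_imp_le by blast
  qed
  have Aeq: "A = {a<..<d}"
  proof
    show "A \<subseteq> {a<..<d}" using lo hi by auto
    show "{a<..<d} \<subseteq> A" using mid by auto
  qed
  obtain x0 where x0: "x0 \<in> A" using ne by blast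
  have ad: "a < d" using lo[OF x0] hi[OF x0] by simp
  have a0: "0 \<le> a" unfolding a_def
    by (rule cInf_greatest[OF ne]) (use A01 in auto)
  have d1: "d \<le> 1" unfolding d_def
    by (rule cSup_least[OF ne]) (use A01 in auto)
  have clA: "closure A = {a..d}" using ad unfolding Aeq by (rule closure_greaterThanLessThan)
  have inA: "interior A = A" using opA by (rule interior_open)
  have "a \<in> frontier A" "d \<in> frontier A"
    unfolding frontier_def clA inA using ad Aeq by auto
  moreover have "frontier A \<subseteq> frontier (supp f)" using frontier_of_components_subset[OF comp] .
  ultimately have "a \<in> frontier (supp f)" "d \<in> frontier (supp f)" by blast+
  moreover have "interior (supp f) = supp f" using opS by (rule interior_open)
  ultimately have "a \<notin> supp f" "d \<notin> supp f" unfolding frontier_def by blast+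
  then have fa: "f a = a" "f d = d" unfolding supp_def by blast+
  show ?thesis
    apply (rule exI[of _ a], rule exI[of _ d])
    using Aeq a0 ad d1 fa by blast
qed

definition germ :: "(real \<Rightarrow> real) \<Rightarrow> real \<Rightarrow> real \<Rightarrow> bool" where
  "germ f a m \<longleftrightarrow> m > 0 \<and> (\<exists>\<delta>>0. \<forall>x\<in>{a..a+\<delta>}. f x = a + m * (x - a))"

lemma germ_PL0:
  assumes "PL0 f" "0 \<le> a" "a < 1" "f a = a"
  shows "\<exists>m. germ f a m"
proof -
  have ex: "\<exists>B. finite B \<and> B \<subseteq> {0..1} \<and>
        (\<forall>a b. 0 \<le> a \<and> a < b \<and> b \<le> 1 \<and> {a<..<b} \<inter> B = {} \<longrightarrow>
           (\<exists>m c. \<forall>x\<in>{a..b}. f x = m * x + c))"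
    using assms(1) unfolding PL0_def by (elim conjE)
  then obtain B where B: "finite B" "B \<subseteq> {0..1}" and
    lin: "\<forall>a b. 0 \<le> a \<and> a < b \<and> b \<le> 1 \<and> {a<..<b} \<inter> B = {} \<longrightarrow>
           (\<exists>m c. \<forall>x\<in>{a..b}. f x = m * x + c)"
    by (elim exE conjE)
  obtain e where e: "e > 0" "\<forall>x\<in>B. x \<noteq> a \<longrightarrow> e \<le> dist a x" using finite_set_avoid[OF B(1)] by blast
  define \<delta> where "\<delta> = min (e/2) (1 - a)"
  have dpos: "\<delta> > 0" using e assms by (simp add: \<delta>_def)
  have "{a<..<a+\<delta>} \<inter> B = {}"
  proof (rule ccontr)
    assume "{a<..<a+\<delta>} \<inter> B \<noteq> {}"
    then obtain x where "x \<in> B" "a < x" "x < a + \<delta>" by auto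
    then have "e \<le> dist a x" using e by auto
    moreover have "dist a x = x - a" using \<open>a < x\<close> by (simp add: dist_real_def)
    moreover have "\<delta> \<le> e/2" unfolding \<delta>_def by (rule min.cobounded1)
    ultimately show False using \<open>x < a + \<delta>\<close> e(1) by linarith
  qed
  moreover have "a + \<delta> \<le> 1"
  proof -
    have "\<delta> \<le> 1 - a" unfolding \<delta>_def by (rule min.cobounded2)
    then show ?thesis by linarith
  qed
  moreover have "a < a + \<delta>" using dpos by simp
  ultimately have "\<exists>m c. \<forall>x\<in>{a..a+\<delta>}. f x = m * x + c"
    using lin assms(2) by blast
  then obtain m c where mc: "\<forall>x\<in>{a..a+\<delta>}. f x = m * x + c" by blast
  have "a \<in> {a..a+\<delta>}" using dpos by simp
  then have "f a = m * a + c" using mc by blast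
  then have c: "c = a - m * a" using assms(4) by simp
  have fx: "\<forall>x\<in>{a..a+\<delta>}. f x = a + m * (x - a)"
  proof
    fix x assume "x \<in> {a..a+\<delta>}"
    then have "f x = m * x + c" using mc by blast
    then show "f x = a + m * (x - a)" using c by (simp add: algebra_simps)
  qed
  have "f a < f (a + \<delta>)" using PL0_mono[OF assms(1)] dpos by (simp add: strict_mono_less)
  moreover have "a + \<delta> \<in> {a..a+\<delta>}" using dpos by simp
  ultimately have "a < a + m * \<delta>" using fx assms(4) by fastforce
  then have "0 < m * \<delta>" by simp
  then have "m > 0" using dpos by (simp add: zero_less_mult_iff)
  then show ?thesis unfolding germ_def using fx dpos by blast
qed

lemma germ_comp:
  assumes "germ f a m" "germ g a n" shows "germ (f \<circ> g) a (m * n)"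
proof -
  obtain d1 where d1: "d1 > 0" "\<forall>x\<in>{a..a+d1}. f x = a + m * (x - a)" and m: "m > 0"
    using assms(1) unfolding germ_def by blast
  obtain d2 where d2: "d2 > 0" "\<forall>x\<in>{a..a+d2}. g x = a + n * (x - a)" and n: "n > 0"
    using assms(2) unfolding germ_def by blast
  define \<delta> where "\<delta> = min d2 (d1 / n)"
  have dp: "\<delta> > 0" using d1 d2 n by (simp add: \<delta>_def)
  have "(f \<circ> g) x = a + (m * n) * (x - a)" if "x \<in> {a..a+\<delta>}" for x
  proof -
    have l1: "\<delta> \<le> d2" unfolding \<delta>_def by (rule min.cobounded1)
    have l2: "\<delta> \<le> d1 / n" unfolding \<delta>_def by (rule min.cobounded2)
    have x2: "x \<in> {a..a+d2}" using that l1 by auto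
    have "x - a \<le> d1 / n" using that l2 by auto
    then have "n * (x - a) \<le> n * (d1 / n)" using n by (intro mult_left_mono) auto
    then have "n * (x - a) \<le> d1" using n by simp
    then have "a + n * (x - a) \<in> {a..a+d1}" using that n by auto
    moreover have gx: "g x = a + n * (x - a)" using d2 x2 by blast
    ultimately have "f (g x) = a + m * (n * (x - a))" using d1 by simp
    then show ?thesis by (simp add: algebra_simps)
  qed
  then show ?thesis unfolding germ_def using dp m n by auto
qed

lemma germ_inv:
  assumes "bij f" "germ f a m" shows "germ (inv f) a (1 / m)"
proof -
  obtain d1 where d1: "d1 > 0" "\<forall>x\<in>{a..a+d1}. f x = a + m * (x - a)" and m: "m > 0"
    using assms(2) unfolding germ_def by blast
  have "inv f y = a + (1/m) * (y - a)" if "y \<in> {a..a + m * d1}" for y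
  proof -
    define x where "x = a + (1/m) * (y - a)"
    have "(1/m) * (y - a) \<le> (1/m) * (m * d1)" using that m by (intro mult_left_mono) auto
    then have "x \<in> {a..a+d1}" using that m by (auto simp: x_def)
    then have "f x = y" using d1 m by (simp add: x_def)
    moreover have "inv f (f x) = x" by (rule inv_f_f[OF bij_is_inj[OF assms(1)]])
    ultimately have "inv f y = x" by simp
    then show ?thesis by (simp add: x_def)
  qed
  moreover have "1/m > 0" using m by simp
  moreover have "m * d1 > 0" using m d1 by simp
  ultimately show ?thesis unfolding germ_def by blast
qed

lemma germ_cong: "germ f a m \<Longrightarrow> m = m' \<Longrightarrow> germ f a m'" by simp

lemma germ_eq:
  assumes "germ f a m" "germ g a m" shows "\<exists>\<delta>>0. \<forall>x\<in>{a..a+\<delta>}. f x = g x"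
proof -
  obtain d1 where d1: "d1 > 0" "\<forall>x\<in>{a..a+d1}. f x = a + m * (x - a)"
    using assms(1) unfolding germ_def by blast
  obtain d2 where d2: "d2 > 0" "\<forall>x\<in>{a..a+d2}. g x = a + m * (x - a)"
    using assms(2) unfolding germ_def by blast
  show ?thesis using d1 d2 by (intro exI[of _ "min d1 d2"]) auto
qed

lemma dyn1:
  fixes h :: "real \<Rightarrow> real"
  assumes sm: "strict_mono h" and c: "continuous_on {a..d} h" and ha: "h a = a"
    and nf: "\<forall>x\<in>{a<..<d}. h x \<noteq> x" and x: "x \<in> {a<..<d}" and hx: "h x < x" and dp: "\<delta> > 0"
  shows "\<exists>n. (h^^n) x \<in> {a<..<a+\<delta>}"
proof -
  define s where "s n = (h^^n) x" for n
  have sS: "s (Suc n) = h (s n)" for n by (simp add: s_def)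
  have dec: "s (Suc n) < s n" for n
  proof (induction n)
    case 0 then show ?case using hx by (simp add: s_def)
  next
    case (Suc n) then show ?case using sS strict_monoD[OF sm] by metis
  qed
  have low: "a < s n" for n
  proof (induction n)
    case 0 then show ?case using x by (simp add: s_def)
  next
    case (Suc n) then show ?case using sS strict_monoD[OF sm] ha by metis
  qed
  have ds: "decseq s" by (rule decseq_SucI) (use dec in \<open>simp add: less_imp_le\<close>)
  have up: "s n \<le> x" for n using decseqD[OF ds, of 0 n] by (simp add: s_def)
  obtain L where L: "s \<longlonglongrightarrow> L" "\<forall>i. L \<le> s i"
    using decseq_convergent[OF ds, of a] low less_imp_le by blast
  have La: "a \<le> L"
  proof (rule LIMSEQ_le_const[OF L(1)])
    show "\<exists>N. \<forall>n\<ge>N. a \<le> s n" using low less_imp_le by blast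
  qed
  have "L \<le> s 0" using L(2) by blast
  then have Ld: "L < d" using x by (simp add: s_def)
  have sad: "s n \<in> {a..d}" for n using low[of n] up[of n] x by auto
  have "(\<lambda>n. h (s n)) \<longlonglongrightarrow> h L"
    by (rule continuous_on_tendsto_compose[OF c L(1)]) (use La Ld sad in auto)
  moreover have "(\<lambda>n. h (s n)) \<longlonglongrightarrow> L" using LIMSEQ_Suc[OF L(1)] by (simp add: sS)
  ultimately have hL: "h L = L" using LIMSEQ_unique by blast
  have "L = a"
  proof (rule ccontr)
    assume "L \<noteq> a"
    then have "L \<in> {a<..<d}" using La Ld by auto
    then show False using nf hL by blast
  qed
  then have "eventually (\<lambda>n. s n < a + \<delta>) sequentially"
    using order_tendstoD(2)[OF L(1)] dp by simp
  then obtain N where "\<forall>n\<ge>N. s n < a + \<delta>" by (auto simp: eventually_sequentially)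
  then have "s N < a + \<delta>" by blast
  then show ?thesis using low[of N] by (auto simp: s_def)
qed

lemma funpow_inv_cancel:
  fixes g :: "'a \<Rightarrow> 'a"
  assumes "surj g" shows "(g^^n) ((inv g^^n) x) = x"
proof -
  have gi: "g \<circ> inv g = id" using assms by (simp add: surj_iff)
  have "(g^^n) \<circ> (inv g^^n) = id"
  proof (induction n)
    case 0 show ?case by (simp add: id_def)
  next
    case (Suc n)
    have e1: "g^^Suc n = (g^^n) \<circ> g" by (rule funpow_Suc_right)
    have e2: "inv g^^Suc n = inv g \<circ> (inv g^^n)" by simp
    have "(g^^Suc n) \<circ> (inv g^^Suc n) = ((g^^n) \<circ> g) \<circ> (inv g \<circ> (inv g^^n))"
      unfolding e1 e2 ..
    also have "\<dots> = (g^^n) \<circ> (g \<circ> inv g) \<circ> (inv g^^n)" by (simp add: comp_assoc)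
    also have "\<dots> = id" by (simp only: gi comp_id Suc.IH)
    finally show ?case .
  qed
  then show ?thesis by (metis comp_apply id_apply)
qed

lemma dyn:
  assumes "P g" "g a = a" "g d = d" "0 \<le> a" "d \<le> 1"
    and nf: "\<forall>x\<in>{a<..<d}. g x \<noteq> x" and x: "x \<in> {a<..<d}" and dp: "\<delta> > 0"
  shows "(\<exists>n. (g^^n) x \<in> {a<..<a+\<delta>}) \<or> (\<exists>n y. y \<in> {a<..<a+\<delta>} \<and> (g^^n) y = x)"
proof (cases "g x < x")
  case True
  have sub: "{a..d} \<subseteq> {0..1}" using assms(4,5) by auto
  have "continuous_on {a..d} g" using assms(1) unfolding P_def
    using continuous_on_subset[OF _ sub] by blast
  then show ?thesis using dyn1[of g a d x \<delta>] assms True by (auto simp: P_def)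
next
  case False
  moreover have "g x \<noteq> x" using nf x by blast
  ultimately have gx: "x < g x" by linarith
  have Pi: "P (inv g)" using P_inv[OF assms(1)] .
  have b: "bij g" using assms(1) by (simp add: P_def)
  have m: "strict_mono g" using assms(1) by (simp add: P_def)
  have ia: "inv g a = a" using P_fix_inv[OF assms(1,2)] .
  have ix: "inv g x < x"
  proof -
    have "g (inv g x) < g x" using gx b by (simp add: bij_is_surj surj_f_inv_f)
    then show ?thesis using m by (simp add: strict_mono_less)
  qed
  have nfi: "\<forall>y\<in>{a<..<d}. inv g y \<noteq> y"
  proof (intro ballI notI)
    fix y assume y: "y \<in> {a<..<d}" and e: "inv g y = y"
    have "g (inv g y) = y" using b by (simp add: bij_is_surj surj_f_inv_f)
    then have "g y = y" using e by simp
    then show False using nf y by blast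
  qed
  have sub: "{a..d} \<subseteq> {0..1}" using assms(4,5) by auto
  have "continuous_on {a..d} (inv g)" using Pi unfolding P_def
    using continuous_on_subset[OF _ sub] by blast
  then obtain n where "(inv g^^n) x \<in> {a<..<a+\<delta>}"
    using dyn1[of "inv g" a d x \<delta>] Pi ia nfi x ix dp by (auto simp: P_def)
  moreover have "(g^^n) ((inv g^^n) x) = x" using funpow_inv_cancel[OF bij_is_surj[OF b]] .
  ultimately show ?thesis by blast
qed

lemma transfer:
  fixes g u v :: "real \<Rightarrow> real"
  assumes ig: "inj g" and gA: "\<forall>x\<in>{a<..<d}. g x \<in> {a<..<d}"
    and uA: "\<forall>x\<in>{a<..<d}. u x \<in> {a<..<d}" and vA: "\<forall>x\<in>{a<..<d}. v x \<in> {a<..<d}"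
    and cu: "\<forall>x\<in>{a<..<d}. g (u x) = u (g x)" and cv: "\<forall>x\<in>{a<..<d}. g (v x) = v (g x)"
    and Z: "Z \<subseteq> {a<..<d}" and x: "x \<in> {a<..<d}"
    and dy: "(\<exists>n. (g^^n) x \<in> Z) \<or> (\<exists>n y. y \<in> Z \<and> (g^^n) y = x)"
  shows "\<exists>y\<in>Z. (u x = v x \<longleftrightarrow> u y = v y)"
proof -
  have fA: "\<forall>x\<in>{a<..<d}. (g^^n) x \<in> {a<..<d}" for n
    by (induction n) (use gA in auto)
  have fu: "\<forall>x\<in>{a<..<d}. (g^^n) (u x) = u ((g^^n) x)" for n
    by (induction n) (use cu fA in auto)
  have fv: "\<forall>x\<in>{a<..<d}. (g^^n) (v x) = v ((g^^n) x)" for n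
    by (induction n) (use cv fA in auto)
  have inn: "inj (g^^n)" for n using ig by (simp add: inj_fn)
  from dy show ?thesis
  proof
    assume "\<exists>n. (g^^n) x \<in> Z"
    then obtain n where n: "(g^^n) x \<in> Z" by blast
    have "u ((g^^n) x) = v ((g^^n) x) \<longleftrightarrow> (g^^n) (u x) = (g^^n) (v x)"
      using fu fv x by simp
    also have "\<dots> \<longleftrightarrow> u x = v x" by (simp add: inj_eq[OF inn])
    finally show ?thesis using n by metis
  next
    assume "\<exists>n y. y \<in> Z \<and> (g^^n) y = x"
    then obtain n y where y: "y \<in> Z" "(g^^n) y = x" by blast
    have yA: "y \<in> {a<..<d}" using y Z by auto
    have "u x = v x \<longleftrightarrow> (g^^n) (u y) = (g^^n) (v y)" using fu fv yA y(2) by simp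
    also have "\<dots> \<longleftrightarrow> u y = v y" by (simp add: inj_eq[OF inn])
    finally show ?thesis using y by metis
  qed
qed


lemma slope_contra:
  fixes G :: "real \<Rightarrow> real"
  assumes Gy: "G y = y" and Gy2: "G y = a + (m0/m1) * (y - a)"
    and ya: "y - a \<noteq> 0" and m1p: "m1 > 0" and F: "m0 \<noteq> m1" shows False
proof -
  have "(m0/m1) * (y - a) = y - a" using Gy Gy2 by linarith
  then have "(m0/m1) * (y - a) = 1 * (y - a)" by (simp only: mult_1)
  then have "m0/m1 = 1" using mult_right_cancel[OF ya] by blast
  then have "m0 = m1" using m1p by (simp add: divide_eq_eq)
  then show False using F by blast
qed

theorem lemma2p2:
  fixes f0 f1 :: "real \<Rightarrow> real" and A :: "real set"
  assumes "PL0 f0" and "PL0 f1"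
    and "rcomm (rconj f1 f0) (rmul f0 (rinv f1)) = id"
    and "rcomm (rmul f0 (rinv f1)) (rconj f1 (rmul f0 f0)) = id"
    and "A \<in> orbitals f0" and "A \<in> orbitals f1"
  shows "\<forall>x\<in>A. rmul f0 f1 x = rmul f1 f0 x"
proof -
  have P0: "P f0" and P1: "P f1" using PL0_P assms(1,2) by auto
  have b0: "bij f0" and b1: "bij f1" using P0 P1 by (auto simp: P_def)
  obtain a d where Aeq: "A = {a<..<d}" and a0: "0 \<le> a" and ad: "a < d" and d1: "d \<le> 1"
    and f0a: "f0 a = a" and f0d: "f0 d = d"
    using orbital_shape[OF assms(1,5)] by blast
  obtain a' d' where A': "A = {a'<..<d'}" "a' < d'" "f1 a' = a'" "f1 d' = d'"
    using orbital_shape[OF assms(2,6)] by blast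
  have "a' = a" "d' = d" using A' Aeq ad
    by (metis cInf_greaterThanLessThan, metis cSup_greaterThanLessThan)
  then have f1a: "f1 a = a" and f1d: "f1 d = d" using A' by auto
  have mov0: "\<forall>x\<in>A. f0 x \<noteq> x" using assms(5) in_components_subset
    unfolding orbitals_def supp_def by blast
  have mov1: "\<forall>x\<in>A. f1 x \<noteq> x" using assms(6) in_components_subset
    unfolding orbitals_def supp_def by blast
  obtain m0 where gm0: "germ f0 a m0" using germ_PL0[OF assms(1) a0] ad d1 f0a by auto
  obtain m1 where gm1: "germ f1 a m1" using germ_PL0[OF assms(2) a0] ad d1 f1a by auto
  have m0p: "m0 > 0" and m1p: "m1 > 0" using gm0 gm1 by (auto simp: germ_def)
  define G where "G = inv f1 \<circ> f0"
  define H1 where "H1 = f0 \<circ> (f1 \<circ> inv f0)"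
  define H2 where "H2 = (f0 \<circ> f0) \<circ> (f1 \<circ> inv (f0 \<circ> f0))"
  have PG: "P G" unfolding G_def using P0 P1 by (simp add: P_comp P_inv)
  have PH1: "P H1" unfolding H1_def using P0 P1 by (simp add: P_comp P_inv)
  have PH2: "P H2" unfolding H2_def using P0 P1 by (simp add: P_comp P_inv)
  have bG: "bij G" and bH1: "bij H1" and bH2: "bij H2" using PG PH1 PH2 by (auto simp: P_def)
  have i0a: "inv f0 a = a" and i0d: "inv f0 d = d" and i1a: "inv f1 a = a" and i1d: "inv f1 d = d"
    using P_fix_inv P0 P1 f0a f0d f1a f1d by auto
  have i00a: "inv (f0 \<circ> f0) a = a" and i00d: "inv (f0 \<circ> f0) d = d"
    using P_fix_inv[OF P_comp[OF P0 P0]] f0a f0d by auto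
  have Ga: "G a = a" "G d = d" unfolding G_def using f0a f0d i1a i1d by auto
  have H1a: "H1 a = a" "H1 d = d" unfolding H1_def using f0a f0d f1a f1d i0a i0d by auto
  have H2a: "H2 a = a" "H2 d = d" unfolding H2_def using f0a f0d f1a f1d i00a i00d by auto
  have GA: "\<forall>x\<in>{a<..<d}. G x \<in> {a<..<d}" using P_maps[OF PG Ga] by blast
  have H1A: "\<forall>x\<in>{a<..<d}. H1 x \<in> {a<..<d}" using P_maps[OF PH1 H1a] by blast
  have H2A: "\<forall>x\<in>{a<..<d}. H2 x \<in> {a<..<d}" using P_maps[OF PH2 H2a] by blast
  have i0A: "\<forall>x\<in>{a<..<d}. inv f0 x \<in> {a<..<d}" using P_maps[OF P_inv[OF P0] i0a i0d] by blast
  have f1A: "\<forall>x\<in>{a<..<d}. f1 x \<in> {a<..<d}" using P_maps[OF P1 f1a f1d] by blast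
  have f0A: "\<forall>x\<in>{a<..<d}. f0 x \<in> {a<..<d}" using P_maps[OF P0 f0a f0d] by blast
  have e1: "rconj f1 f0 = H1" by (simp add: rconj_def rmul_def rinv_def H1_def)
  have e2: "rmul f0 (rinv f1) = G" by (simp add: rmul_def rinv_def G_def)
  have e3: "rconj f1 (rmul f0 f0) = H2" by (simp add: rconj_def rmul_def rinv_def H2_def)
  have cH1G: "H1 (G z) = G (H1 z)" for z
    using comm_of_rcomm[OF assms(3)[unfolded e1 e2] bH1 bG] .
  have cGH2: "G (H2 z) = H2 (G z)" for z
    using comm_of_rcomm[OF assms(4)[unfolded e2 e3] bG bH2] .
  have movH1: "\<forall>x\<in>{a<..<d}. H1 x \<noteq> x"
  proof (intro ballI notI)
    fix x assume x: "x \<in> {a<..<d}" and h: "H1 x = x"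
    then have "f0 (f1 (inv f0 x)) = x" by (simp add: H1_def)
    then have "inv f0 (f0 (f1 (inv f0 x))) = inv f0 x" by simp
    then have "f1 (inv f0 x) = inv f0 x" using b0 by (simp add: bij_is_inj)
    then show False using mov1 i0A x Aeq by blast
  qed
  have dynH1: "\<And>x \<delta>. x \<in> {a<..<d} \<Longrightarrow> \<delta> > 0 \<Longrightarrow>
      (\<exists>n. (H1^^n) x \<in> {a<..<a+\<delta>}) \<or> (\<exists>n y. y \<in> {a<..<a+\<delta>} \<and> (H1^^n) y = x)"
    using dyn[OF PH1 H1a a0 d1 movH1] by blast
  have gG: "germ G a (m0 / m1)" unfolding G_def
    by (rule germ_cong[OF germ_comp[OF germ_inv[OF b1 gm1] gm0]]) simp
  have gH1: "germ H1 a m1" unfolding H1_def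
    by (rule germ_cong[OF germ_comp[OF gm0 germ_comp[OF gm1 germ_inv[OF b0 gm0]]]]) (use m0p in simp)
  have b00: "bij (f0 \<circ> f0)" using b0 by (simp add: bij_comp)
  have gH2: "germ H2 a m1" unfolding H2_def
    by (rule germ_cong[OF germ_comp[OF germ_comp[OF gm0 gm0]
          germ_comp[OF gm1 germ_inv[OF b00 germ_comp[OF gm0 gm0]]]]]) (use m0p in simp)
  have inj1: "inj H1" "inj G" using bH1 bG by (auto simp: bij_is_inj)
  have key: "\<forall>x\<in>{a<..<d}. f1 (f0 x) = f0 (f1 x)"
  proof (cases "m0 = m1")
    case True
    then have "germ G a 1" using gG m1p by simp
    moreover have "germ id a 1" unfolding germ_def by (auto intro: exI[of _ 1])
    ultimately obtain \<delta> where dp: "\<delta> > 0" and dG: "\<forall>x\<in>{a..a+\<delta>}. G x = id x"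
      using germ_eq by blast
    define \<delta>' where "\<delta>' = min \<delta> ((d - a) / 2)"
    have dp': "\<delta>' > 0" using dp ad by (simp add: \<delta>'_def)
    have Zs: "{a<..<a+\<delta>'} \<subseteq> {a<..<d}"
    proof
      fix x assume "x \<in> {a<..<a+\<delta>'}"
      moreover have "\<delta>' \<le> (d - a) / 2" unfolding \<delta>'_def by (rule min.cobounded2)
      ultimately show "x \<in> {a<..<d}" using ad by simp
    qed
    have Gid: "G x = x" if x: "x \<in> {a<..<d}" for x
    proof -
      obtain y where y: "y \<in> {a<..<a+\<delta>'}" and iff: "G x = id x \<longleftrightarrow> G y = id y"
        using transfer[OF inj1(1) H1A GA _ _ _ Zs x dynH1[OF x dp'], of id] cH1G
        by auto
      have "G y = id y" using dG y by (auto simp: \<delta>'_def)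
      then show ?thesis using iff by simp
    qed
    have eq: "f0 x = f1 x" if x: "x \<in> {a<..<d}" for x
    proof -
      have "inv f1 (f0 x) = x" using Gid[OF x] by (simp add: G_def)
      then have "f1 (inv f1 (f0 x)) = f1 x" by simp
      then show ?thesis using b1 by (simp add: bij_is_surj surj_f_inv_f)
    qed
    show ?thesis using eq f1A by simp
  next
    case False
    obtain \<delta>G where dG: "\<delta>G > 0" "\<forall>x\<in>{a..a+\<delta>G}. G x = a + (m0/m1) * (x - a)"
      using gG unfolding germ_def by blast
    define \<delta>' where "\<delta>' = min \<delta>G ((d - a) / 2)"
    have dp': "\<delta>' > 0" using dG ad by (simp add: \<delta>'_def)
    have Zs: "{a<..<a+\<delta>'} \<subseteq> {a<..<d}"
    proof
      fix x assume "x \<in> {a<..<a+\<delta>'}"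
      moreover have "\<delta>' \<le> (d - a) / 2" unfolding \<delta>'_def by (rule min.cobounded2)
      ultimately show "x \<in> {a<..<d}" using ad by simp
    qed
    have movG: "\<forall>x\<in>{a<..<d}. G x \<noteq> x"
    proof (intro ballI notI)
      fix x assume x: "x \<in> {a<..<d}" and h: "G x = x"
      have vA: "\<forall>x\<in>{a<..<d}. id x \<in> {a<..<d}" by simp
      have cu: "\<forall>x\<in>{a<..<d}. H1 (G x) = G (H1 x)" using cH1G by blast
      have cv: "\<forall>x\<in>{a<..<d}. H1 (id x) = id (H1 x)" by simp
      have ex: "\<exists>y\<in>{a<..<a+\<delta>'}. (G x = id x \<longleftrightarrow> G y = id y)"
        by (rule transfer[OF inj1(1) H1A GA vA cu cv Zs x dynH1[OF x dp']])
      obtain y where y: "y \<in> {a<..<a+\<delta>'}" and iff: "G x = id x \<longleftrightarrow> G y = id y"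
        using ex by auto
      have "G x = id x" using h by simp
      then have Gy: "G y = y" using iff by simp
      have "\<delta>' \<le> \<delta>G" unfolding \<delta>'_def by (rule min.cobounded1)
      then have "y \<in> {a..a+\<delta>G}" using y by simp
      then have Gy2: "G y = a + (m0/m1) * (y - a)" by (rule dG(2)[rule_format])
      have ya: "y - a \<noteq> 0" using y by auto
      show False by (rule slope_contra[of G y a m0 m1, OF Gy Gy2 ya m1p False])
    qed
    have dynG: "\<And>x \<delta>. x \<in> {a<..<d} \<Longrightarrow> \<delta> > 0 \<Longrightarrow>
      (\<exists>n. (G^^n) x \<in> {a<..<a+\<delta>}) \<or> (\<exists>n y. y \<in> {a<..<a+\<delta>} \<and> (G^^n) y = x)"
      using dyn[OF PG Ga a0 d1 movG] by blast
    define K1 where "K1 = H1 \<circ> H2"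
    define K2 where "K2 = H2 \<circ> H1"
    have gK1: "germ K1 a (m1 * m1)" unfolding K1_def using germ_comp[OF gH1 gH2] .
    have gK2: "germ K2 a (m1 * m1)" unfolding K2_def using germ_comp[OF gH2 gH1] .
    obtain \<delta>K where dK: "\<delta>K > 0" "\<forall>x\<in>{a..a+\<delta>K}. K1 x = K2 x" using germ_eq[OF gK1 gK2] by blast
    define \<delta>2 where "\<delta>2 = min \<delta>K ((d - a) / 2)"
    have dp2: "\<delta>2 > 0" using dK ad by (simp add: \<delta>2_def)
    have Zs2: "{a<..<a+\<delta>2} \<subseteq> {a<..<d}"
    proof
      fix x assume "x \<in> {a<..<a+\<delta>2}"
      moreover have "\<delta>2 \<le> (d - a) / 2" unfolding \<delta>2_def by (rule min.cobounded2)
      ultimately show "x \<in> {a<..<d}" using ad by simp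
    qed
    have K1A: "\<forall>x\<in>{a<..<d}. K1 x \<in> {a<..<d}" using H1A H2A by (simp add: K1_def)
    have K2A: "\<forall>x\<in>{a<..<d}. K2 x \<in> {a<..<d}" using H1A H2A by (simp add: K2_def)
    have cK1: "\<forall>x\<in>{a<..<d}. G (K1 x) = K1 (G x)"
    proof
      fix x
      have "G (H1 (H2 x)) = H1 (G (H2 x))" by (rule cH1G[symmetric])
      also have "\<dots> = H1 (H2 (G x))" by (simp only: cGH2)
      finally show "G (K1 x) = K1 (G x)" by (simp add: K1_def)
    qed
    have cK2: "\<forall>x\<in>{a<..<d}. G (K2 x) = K2 (G x)"
    proof
      fix x
      have "G (H2 (H1 x)) = H2 (G (H1 x))" by (rule cGH2)
      also have "\<dots> = H2 (H1 (G x))" by (simp only: cH1G)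
      finally show "G (K2 x) = K2 (G x)" by (simp add: K2_def)
    qed
    have K12: "K1 x = K2 x" if x: "x \<in> {a<..<d}" for x
    proof -
      obtain y where y: "y \<in> {a<..<a+\<delta>2}" and iff: "K1 x = K2 x \<longleftrightarrow> K1 y = K2 y"
        using transfer[OF inj1(2) GA K1A K2A cK1 cK2 Zs2 x dynG[OF x dp2]] by blast
      have "K1 y = K2 y" using dK y by (auto simp: \<delta>2_def)
      then show ?thesis using iff by simp
    qed
    have cH12: "\<forall>x\<in>{a<..<d}. H1 (H2 x) = H2 (H1 x)" using K12 by (simp add: K1_def K2_def)
    obtain \<delta>H where dH: "\<delta>H > 0" "\<forall>x\<in>{a..a+\<delta>H}. H2 x = H1 x" using germ_eq[OF gH2 gH1] by blast
    define \<delta>3 where "\<delta>3 = min \<delta>H ((d - a) / 2)"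
    have dp3: "\<delta>3 > 0" using dH ad by (simp add: \<delta>3_def)
    have Zs3: "{a<..<a+\<delta>3} \<subseteq> {a<..<d}"
    proof
      fix x assume "x \<in> {a<..<a+\<delta>3}"
      moreover have "\<delta>3 \<le> (d - a) / 2" unfolding \<delta>3_def by (rule min.cobounded2)
      ultimately show "x \<in> {a<..<d}" using ad by simp
    qed
    have H21: "H2 x = H1 x" if x: "x \<in> {a<..<d}" for x
    proof -
      obtain y where y: "y \<in> {a<..<a+\<delta>3}" and iff: "H2 x = H1 x \<longleftrightarrow> H2 y = H1 y"
        using transfer[OF inj1(1) H1A H2A H1A cH12 _ Zs3 x dynH1[OF x dp3]] by blast
      have "H2 y = H1 y" using dH y by (auto simp: \<delta>3_def)
      then show ?thesis using iff by simp
    qed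
    have io: "inv (f0 \<circ> f0) = inv f0 \<circ> inv f0" using o_inv_distrib[OF b0 b0] .
    show ?thesis
    proof
      fix z assume z: "z \<in> {a<..<d}"
      define y where "y = f0 (f0 z)"
      have yA: "y \<in> {a<..<d}" using f0A z by (simp add: y_def)
      have iy: "inv f0 (inv f0 y) = z" using b0 by (simp add: y_def bij_is_inj)
      have i1: "inv f0 y = f0 z" using b0 by (simp add: y_def bij_is_inj)
      have "H2 y = f0 (f0 (f1 z))" by (simp add: H2_def io iy)
      moreover have "H1 y = f0 (f1 (f0 z))" by (simp add: H1_def i1)
      ultimately have "f0 (f0 (f1 z)) = f0 (f1 (f0 z))" using H21[OF yA] by simp
      then have "f0 (f1 z) = f1 (f0 z)" using b0 by (simp add: bij_is_inj inj_eq)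
      then show "f1 (f0 z) = f0 (f1 z)" by simp
    qed
  qed
  show ?thesis using key Aeq by (simp add: rmul_def)
qed

end
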